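(* Let $0<p<\infty$, $0<\alpha<\infty$, and let $\beta$ be a real number with $\beta p<-1$ such that $\nu:=-(\alpha+\beta+\frac1p)>0$. Let $K>1$ be sufficiently large, $\delta_n=K^{-n}$, $f_n(z)=\delta_n^\nu(1+\delta_n-z)^\beta$ for $z\in\mathbb{D}$, $n\ge1$, and $F(z)=\sum_{n=1}^\infty|f_n(z)|$. Then there is a constant $C$ such that $(1-r)^\alpha M_p(r,F)\le C$ for every $r\in[0,1)$.
   Context: $\mathbb{D}$ is the unit disk; $(1+\delta_n-z)^\beta$ uses the principal branch (note $\mathrm{Re}(1+\delta_n-z)>0$ on $\mathbb{D}$). For a function $F$ on $\mathbb{D}$, $M_p(r,F)=\left(\int_0^{2\pi}|F(re^{i\theta})|^p\frac{d\theta}{2\pi}\right)^{1/p}$. *)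

theory Defs
  imports "HOL-Analysis.Analysis"
begin

definition Mp :: "real \<Rightarrow> real \<Rightarrow> (complex \<Rightarrow> complex) \<Rightarrow> real" where
  "Mp p r F = (integral {0..2*pi} (\<lambda>\<theta>. norm (F (of_real r * cis \<theta>)) powr p) / (2*pi)) powr (1/p)"

definition fn_lemma :: "real \<Rightarrow> real \<Rightarrow> real \<Rightarrow> nat \<Rightarrow> complex \<Rightarrow> complex" where
  "fn_lemma K \<nu> \<beta> n z =
     of_real ((K powr (- real n)) powr \<nu>) * (1 + of_real (K powr (- real n)) - z) powr (of_real \<beta>)"

definition F_lemma :: "real \<Rightarrow> real \<Rightarrow> real \<Rightarrow> complex \<Rightarrow> complex" where
  "F_lemma K \<nu> \<beta> z = of_real (\<Sum>n. norm (fn_lemma K \<nu> \<beta> (Suc n) z))"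

end

theory Submission imports Defs "HOL-Analysis.Analysis" begin

lemma cos_aux1: "(0::real) \<le> x \<Longrightarrow> 1 - cos x \<le> x^2/2"
proof -
  assume x: "0 \<le> x"
  let ?f = "\<lambda>x::real. cos x - 1 + x^2/2"
  have "\<exists>y. (?f has_real_derivative y) (at u) \<and> y \<ge> 0" if "0 \<le> u" "u \<le> x" for u
  proof (intro exI conjI)
    show "(?f has_real_derivative (u - sin u)) (at u)"
      by (auto intro!: derivative_eq_intros)
    show "0 \<le> u - sin u" using sin_x_le_x[OF that(1)] by simp
  qed
  then have "?f x \<ge> ?f 0"
    by (intro DERIV_nonneg_imp_nondecreasing[OF x]) auto
  then show ?thesis by simp
qed

lemma sin_aux: "(0::real) \<le> x \<Longrightarrow> x - x^3/6 \<le> sin x"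
proof -
  assume x: "0 \<le> x"
  let ?f = "\<lambda>x::real. sin x - x + x^3/6"
  have "\<exists>y. (?f has_real_derivative y) (at u) \<and> y \<ge> 0" if "0 \<le> u" "u \<le> x" for u
  proof (intro exI conjI)
    show "(?f has_real_derivative (cos u - 1 + u^2/2)) (at u)"
      by (auto intro!: derivative_eq_intros simp: power2_eq_square)
    show "0 \<le> cos u - 1 + u^2/2" using cos_aux1[OF that(1)] by simp
  qed
  then have "?f x \<ge> ?f 0"
    by (intro DERIV_nonneg_imp_nondecreasing[OF x]) auto
  then show ?thesis by simp
qed

lemma cos_aux2: "(0::real) \<le> x \<Longrightarrow> x^2/2 - x^4/24 \<le> 1 - cos x"
proof -
  assume x: "0 \<le> x"
  let ?f = "\<lambda>x::real. 1 - cos x - x^2/2 + x^4/24"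
  have "\<exists>y. (?f has_real_derivative y) (at u) \<and> y \<ge> 0" if "0 \<le> u" "u \<le> x" for u
  proof (intro exI conjI)
    show "(?f has_real_derivative (sin u - u + u^3/6)) (at u)"
      by (auto intro!: derivative_eq_intros simp: power2_eq_square)
    show "0 \<le> sin u - u + u^3/6" using sin_aux[OF that(1)] by simp
  qed
  then have "?f x \<ge> ?f 0"
    by (intro DERIV_nonneg_imp_nondecreasing[OF x]) auto
  then show ?thesis by simp
qed

lemma cos_bound: "(0::real) \<le> x \<Longrightarrow> x \<le> pi \<Longrightarrow> x^2/16 \<le> 1 - cos x"
proof -
  assume x: "0 \<le> x" "x \<le> pi"
  show ?thesis
  proof (cases "x \<le> 2")
    case True
    have x2: "x^2 \<le> 4" using True x power_mono[of x 2 2] by simp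
    have "x^2 * (x^2) \<le> x^2 * 4"
      by (rule mult_left_mono[OF x2]) simp
    moreover have "x^4 = x^2 * x^2" by algebra
    moreover have "0 \<le> x^2" by simp
    ultimately have "x^2/16 \<le> x^2/2 - x^4/24" by linarith
    then show ?thesis using cos_aux2[OF x(1)] by linarith
  next
    case False
    have "0 \<le> cos (pi - x)" using x False pi_less_4 by (intro cos_ge_zero) auto
    then have "cos x \<le> 0" by simp
    moreover have "x^2 \<le> 16" using x pi_less_4 power_mono[of x 4 2] by simp
    ultimately show ?thesis by simp
  qed
qed

lemma norm_sq: "(cmod (1 - of_real r * cis \<theta>))^2 = (1-r)^2 + 2*r*(1 - cos \<theta>)"
proof -
  have "(cmod (1 - of_real r * cis \<theta>))^2 = (1 - r * cos \<theta>)^2 + (r * sin \<theta>)^2"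
    by (simp add: cmod_power2 cis.sel)
  also have "\<dots> = 1 - 2*r*cos \<theta> + r^2 * ((sin \<theta>)^2 + (cos \<theta>)^2)"
    by algebra
  also have "\<dots> = (1-r)^2 + 2*r*(1 - cos \<theta>)"
    by (simp add: power2_eq_square algebra_simps)
  finally show ?thesis .
qed

lemma dist_bound:
  assumes r: "0 \<le> r" "r < 1" and th: "0 \<le> \<theta>" "\<theta> \<le> 2*pi"
  shows "((1-r) + min \<theta> (2*pi-\<theta>)/4)/3 \<le> cmod (1 - of_real r * cis \<theta>)"
proof -
  define m where "m = min \<theta> (2*pi-\<theta>)"
  define t where "t = 1 - r"
  have m: "0 \<le> m" "m \<le> pi" using th by (auto simp: m_def)
  have cm: "cos \<theta> = cos m"
    by (cases "\<theta> \<le> 2*pi-\<theta>") (auto simp: m_def min_def cos_diff)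
  have c: "m^2/16 \<le> 1 - cos \<theta>" using cos_bound[OF m] cm by simp
  define s where "s = cmod (1 - of_real r * cis \<theta>)"
  have s2: "s^2 = t^2 + 2*r*(1 - cos \<theta>)" unfolding s_def t_def by (rule norm_sq)
  have t: "0 < t" "t \<le> 1" using r by (auto simp: t_def)
  have "((t + m/4)/3)^2 \<le> s^2"
  proof (cases "r \<ge> 1/2")
    case True
    have "2*r*(1 - cos \<theta>) \<ge> 2*(1/2)*(m^2/16)"
      using True c m by (intro mult_mono) auto
    then have "s^2 \<ge> t^2 + m^2/16" using s2 by simp
    moreover have "(t + m/4)^2 \<le> 2*(t^2 + m^2/16)"
      using sum_squares_ge_zero[of "t - m/4" 0] by (simp add: power2_eq_square algebra_simps)
    moreover have "((t + m/4)/3)^2 = (t + m/4)^2/9" by (simp add: power_divide)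
    ultimately have "(t + m/4)^2/9 \<le> s^2" 
      apply (simp add: field_simps) using zero_le_power2[of s] by linarith
    then show ?thesis by (simp add: power_divide)
  next
    case False
    have "m/4 \<le> 1" using m pi_less_4 by simp
    then have "(t + m/4)/3 \<le> t" using False t by (simp add: t_def)
    then have "((t + m/4)/3)^2 \<le> t^2" using t m by (intro power_mono) auto
    moreover have "2*r*(1 - cos \<theta>) \<ge> 0" using r by simp
    ultimately show ?thesis using s2 by linarith
  qed
  then have "(t + m/4)/3 \<le> s" by (rule power2_le_imp_le) (simp add: s_def)
  then show ?thesis by (simp add: s_def t_def m_def)
qed

lemma term_bound:
  fixes d r \<beta> :: real
  assumes d: "d > 0" and b: "\<beta> < 0" and r: "0 \<le> r" "r < 1"
  shows "cmod ((1 + of_real d - of_real r * cis \<theta>) powr of_real \<beta>) \<le> d powr \<beta>"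
    and "cmod ((1 + of_real d - of_real r * cis \<theta>) powr of_real \<beta>) \<le> cmod (1 - of_real r * cis \<theta>) powr \<beta>"
proof -
  define w where "w = 1 - of_real r * cis \<theta>"
  have "r * cos \<theta> \<le> r" using r by (simp add: mult_left_le)
  then have rew: "Re w > 0" using r by (simp add: w_def cis.sel)
  have e: "1 + of_real d - of_real r * cis \<theta> = of_real d + w" by (simp add: w_def)
  have n: "cmod ((1 + of_real d - of_real r * cis \<theta>) powr of_real \<beta>) = cmod (of_real d + w) powr \<beta>"
    unfolding e by (subst norm_powr_real_powr') auto
  have "d \<le> Re (of_real d + w)" using rew by simp
  also have "\<dots> \<le> cmod (of_real d + w)" by (rule complex_Re_le_cmod)
  finally have 1: "d \<le> cmod (of_real d + w)" .
  have "(cmod w)^2 \<le> (cmod (of_real d + w))^2"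
  proof -
    have "(Re w)^2 \<le> (d + Re w)^2" using rew d by (intro power_mono) auto
    then show ?thesis by (simp add: cmod_power2)
  qed
  then have 2: "cmod w \<le> cmod (of_real d + w)" by (rule power2_le_imp_le) simp
  have wne: "cmod w > 0" using rew by auto
  show "cmod ((1 + of_real d - of_real r * cis \<theta>) powr of_real \<beta>) \<le> d powr \<beta>"
    unfolding n using powr_mono2'[of \<beta> d] 1 b d by simp
  show "cmod ((1 + of_real d - of_real r * cis \<theta>) powr of_real \<beta>) \<le> cmod (1 - of_real r * cis \<theta>) powr \<beta>"
    unfolding n w_def[symmetric] using powr_mono2'[of \<beta> "cmod w"] 2 b wne by simp
qed

lemma series_bound:
  fixes K \<nu> \<beta> s :: real and T :: "nat \<Rightarrow> real"
  assumes K: "K > 1" and nu: "\<nu> > 0" and nb: "\<nu> + \<beta> < 0" and s: "s > 0"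
    and T0: "\<And>n. 0 \<le> T n"
    and T1: "\<And>n. T n \<le> (K powr -real (Suc n)) powr \<nu> * (K powr -real (Suc n)) powr \<beta>"
    and T2: "\<And>n. T n \<le> (K powr -real (Suc n)) powr \<nu> * s powr \<beta>"
  shows "summable T \<and> suminf T \<le> (K powr (-(\<nu>+\<beta>)) / (K powr (-(\<nu>+\<beta>)) - 1) + 1/(1 - K powr (-\<nu>))) * s powr (\<nu>+\<beta>)"
proof -
  define \<rho> where "\<rho> = K powr (-\<nu>)"
  define q where "q = K powr (-(\<nu>+\<beta>))"
  define d where "d n = K powr -real (Suc n)" for n
  have \<rho>: "0 < \<rho>" "\<rho> < 1" using K nu by (auto simp: \<rho>_def powr_less_one)
  have q: "q > 1" using K nb powr_less_mono[of 0 "-(\<nu>+\<beta>)" K] by (auto simp: q_def)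
  have dpos: "d n > 0" for n using K by (simp add: d_def)
  have dnu: "d n powr \<nu> = \<rho>^Suc n" for n
  proof -
    have "d n powr \<nu> = \<rho> powr real (Suc n)"
      by (simp add: d_def \<rho>_def powr_powr mult.commute algebra_simps)
    also have "\<dots> = \<rho>^Suc n" by (rule powr_realpow) (rule \<rho>(1))
    finally show ?thesis .
  qed
  have dq: "d n powr \<nu> * d n powr \<beta> = q^Suc n" for n
  proof -
    have "d n powr \<nu> * d n powr \<beta> = d n powr (\<nu> + \<beta>)" by (simp add: powr_add)
    also have "\<dots> = q powr real (Suc n)"
      by (simp add: d_def q_def powr_powr mult.commute algebra_simps)
    also have "\<dots> = q^Suc n" by (rule powr_realpow) (use q in simp)
    finally show ?thesis .
  qed
  have T1': "T n \<le> q^Suc n" for n using T1[of n] dq[of n] by (simp add: d_def)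
  have T2': "T n \<le> s powr \<beta> * \<rho>^Suc n" for n using T2[of n] dnu[of n] by (simp add: d_def mult.commute)
  have geo: "(\<lambda>n. s powr \<beta> * \<rho>^(Suc m) * \<rho>^n) sums (s powr \<beta> * \<rho>^(Suc m) * (1/(1-\<rho>)))" for m
    by (rule sums_mult) (rule geometric_sums, use \<rho> in simp)
  have sumT: "summable T"
  proof (rule summable_comparison_test)
    show "\<exists>N. \<forall>n\<ge>N. norm (T n) \<le> s powr \<beta> * \<rho>^(Suc 0) * \<rho>^n"
      using T2' T0 by (auto simp: mult_ac)
    show "summable (\<lambda>n. s powr \<beta> * \<rho>^(Suc 0) * \<rho>^n)" using geo[of 0] by (rule sums_summable)
  qed
  obtain n0 where n0: "1/s < K^n0" using real_arch_pow[OF K] by blast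
  have "d n0 \<le> s"
  proof -
    have "d n0 = 1 / K^(Suc n0)" unfolding d_def powr_minus powr_realpow[of K "Suc n0", OF order.strict_trans[OF zero_less_one K]]
      by (simp add: divide_inverse)
    also have "\<dots> \<le> 1 / K^n0" using K by (intro divide_left_mono) auto
    also have "\<dots> < s" using n0 s K by (simp add: field_simps)
    finally show ?thesis by simp
  qed
  define m where "m = (LEAST n. d n \<le> s)"
  have dm: "d m \<le> s" unfolding m_def by (rule LeastI) fact
  have dlt: "n < m \<Longrightarrow> s < d n" for n unfolding m_def using not_less_Least by force
  define S where "S = s powr (\<nu>+\<beta>)"
  have Spos: "S > 0" using s by (simp add: S_def)
  have head: "(\<Sum>n<m. T n) \<le> q/(q-1) * S"
  proof (cases m)
    case 0
    then show ?thesis using q Spos by simp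
  next
    case (Suc k)
    have "q^m = d k powr \<nu> * d k powr \<beta>" using dq[of k] Suc by simp
    also have "\<dots> = d k powr (\<nu>+\<beta>)" by (simp add: powr_add)
    also have "\<dots> \<le> s powr (\<nu>+\<beta>)" using dlt[of k] Suc nb s by (intro powr_mono2') auto
    finally have qm: "q^m \<le> S" by (simp add: S_def)
    have "(\<Sum>n<m. T n) \<le> (\<Sum>n<m. q * q^n)" by (intro sum_mono) (use T1' in simp)
    also have "\<dots> = q * ((q^m - 1)/(q-1))" using q by (simp add: sum_distrib_left[symmetric] geometric_sum)
    also have "\<dots> \<le> q * (q^m/(q-1))" using q by (intro mult_left_mono divide_right_mono) auto
    also have "\<dots> \<le> q * (S/(q-1))" using q qm by (intro mult_left_mono divide_right_mono) auto
    finally show ?thesis by simp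
  qed
  have tail: "(\<Sum>n. T (n + m)) \<le> 1/(1-\<rho>) * S"
  proof -
    have "(\<Sum>n. T (n + m)) \<le> s powr \<beta> * \<rho>^(Suc m) * (1/(1-\<rho>))"
    proof (rule sums_le[OF _ _ geo[of m]])
      show "T (n + m) \<le> s powr \<beta> * \<rho>^(Suc m) * \<rho>^n" for n
        using T2'[of "n+m"] by (simp add: power_add mult_ac)
      show "(\<lambda>n. T (n + m)) sums (\<Sum>n. T (n + m))"
        using sumT by (simp add: summable_iff_shift summable_sums)
    qed
    also have "\<rho>^(Suc m) \<le> s powr \<nu>" using dnu[of m] dm dpos[of m] nu
      by (metis less_imp_le powr_mono2)
    then have "s powr \<beta> * \<rho>^(Suc m) * (1/(1-\<rho>)) \<le> s powr \<beta> * s powr \<nu> * (1/(1-\<rho>))"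
      using \<rho> by (intro mult_right_mono mult_left_mono) auto
    also have "\<dots> = 1/(1-\<rho>) * S" by (simp add: S_def powr_add mult_ac)
    finally show ?thesis .
  qed
  have "suminf T = (\<Sum>n. T (n + m)) + (\<Sum>n<m. T n)" by (rule suminf_split_initial_segment[OF sumT])
  also have "\<dots> \<le> (q/(q-1) + 1/(1-\<rho>)) * S" using head tail by (simp add: distrib_right)
  finally show ?thesis using sumT by (simp add: q_def \<rho>_def S_def)
qed

lemma integral_h:
  fixes t q :: real
  assumes t: "t > 0" and q: "q > 1"
  shows "((\<lambda>\<theta>. (t + \<theta>/4) powr (-q) + (t + (2*pi-\<theta>)/4) powr (-q)) has_integral
           (8/(q-1) * (t powr (1-q) - (t + pi/2) powr (1-q)))) {0..2*pi}"
proof -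
  define G where "G \<theta> = 4/(1-q) * ((t+\<theta>/4) powr (1-q) - (t+(2*pi-\<theta>)/4) powr (1-q))" for \<theta>
  have der: "(G has_real_derivative ((t + \<theta>/4) powr (-q) + (t + (2*pi-\<theta>)/4) powr (-q))) (at \<theta>)"
    if th: "\<theta> \<in> {0..2*pi}" for \<theta>
  proof -
    have p1: "t + \<theta>/4 > 0" and p2: "t + (2*pi-\<theta>)/4 > 0" using th t by (auto simp: add_pos_nonneg)
    have g1: "DERIV (\<lambda>\<theta>. t + \<theta>/4) \<theta> :> 1/4" by (auto intro!: derivative_eq_intros)
    have g2: "DERIV (\<lambda>\<theta>. t + (2*pi-\<theta>)/4) \<theta> :> -1/4" by (auto intro!: derivative_eq_intros)
    have d1: "DERIV (\<lambda>\<theta>. (t+\<theta>/4) powr (1-q)) \<theta> :> (1-q) * (t+\<theta>/4) powr (-q) * (1/4)"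
      using DERIV_fun_powr[OF g1 p1, of "1-q"] by simp
    have d2: "DERIV (\<lambda>\<theta>. (t+(2*pi-\<theta>)/4) powr (1-q)) \<theta> :> (1-q) * (t+(2*pi-\<theta>)/4) powr (-q) * (-1/4)"
      using DERIV_fun_powr[OF g2 p2, of "1-q"] by simp
    have "DERIV G \<theta> :> 4/(1-q) * ((1-q) * (t+\<theta>/4) powr (-q) * (1/4) - (1-q) * (t+(2*pi-\<theta>)/4) powr (-q) * (-1/4))"
      unfolding G_def by (intro DERIV_cmult DERIV_diff d1 d2)
    moreover have "4/(1-q) * ((1-q) * A * (1/4) - (1-q) * B * (-1/4)) = A + B" for A B :: real
      using q by (simp add: field_simps)
    ultimately show ?thesis by (rule DERIV_cong)
  qed
  have "((\<lambda>\<theta>. (t + \<theta>/4) powr (-q) + (t + (2*pi-\<theta>)/4) powr (-q)) has_integral (G (2*pi) - G 0)) {0..2*pi}"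
    by (rule fundamental_theorem_of_calculus)
       (auto intro!: has_vector_derivative_at_within der DERIV_subset[OF der] simp: has_real_derivative_iff_has_vector_derivative[symmetric])
  moreover have "G (2*pi) - G 0 = 8/(q-1) * (t powr (1-q) - (t + pi/2) powr (1-q))"
  proof -
    have "G (2*pi) = 4/(1-q) * ((t + pi/2) powr (1-q) - t powr (1-q))" by (simp add: G_def)
    moreover have "G 0 = 4/(1-q) * (t powr (1-q) - (t + pi/2) powr (1-q))" by (simp add: G_def)
    moreover have "4/(1-q) * (B - A) - 4/(1-q) * (A - B) = 8/(q-1) * (A - B)" for A B :: real
    proof -
      have e1: "4/(1-q) = -4 * (1/(q-1))" using q
        by (metis divide_minus_right minus_diff_eq mult_minus_left times_divide_eq_right mult.right_neutral)
      have e2: "8/(q-1) = 8 * (1/(q-1))" by simp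
      have gen: "-4*X*(B-A) - (-4*X)*(A-B) = 8*X*(A-B)" for X :: real by algebra
      show ?thesis unfolding e1 e2 by (rule gen)
    qed
    ultimately show ?thesis by simp
  qed
  ultimately show ?thesis by simp
qed

lemma pointwise:
  fixes K \<nu> \<beta> r \<theta> :: real
  assumes K: "K > 1" and nu: "\<nu> > 0" and nb: "\<nu> + \<beta> < 0" and b: "\<beta> < 0"
    and r: "0 \<le> r" "r < 1" and th: "0 \<le> \<theta>" "\<theta> \<le> 2*pi"
  shows "norm (F_lemma K \<nu> \<beta> (of_real r * cis \<theta>)) \<le>
     (K powr (-(\<nu>+\<beta>)) / (K powr (-(\<nu>+\<beta>)) - 1) + 1/(1 - K powr (-\<nu>))) *
        (((1-r) + min \<theta> (2*pi-\<theta>)/4)/3) powr (\<nu>+\<beta>)"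
proof -
  define z where "z = of_real r * cis \<theta>"
  define s where "s = cmod (1 - z)"
  define L where "L = ((1-r) + min \<theta> (2*pi-\<theta>)/4)/3"
  define B where "B = K powr (-(\<nu>+\<beta>)) / (K powr (-(\<nu>+\<beta>)) - 1) + 1/(1 - K powr (-\<nu>))"
  define T where "T n = norm (fn_lemma K \<nu> \<beta> (Suc n) z)" for n
  have Lpos: "L > 0" using r th by (auto simp: L_def add_pos_nonneg)
  have Ls: "L \<le> s" unfolding L_def s_def z_def by (rule dist_bound[OF r th])
  have spos: "s > 0" using Lpos Ls by linarith
  have Teq: "T n = (K powr -real (Suc n)) powr \<nu> *
        cmod ((1 + of_real (K powr -real (Suc n)) - of_real r * cis \<theta>) powr of_real \<beta>)" for n
    by (simp add: T_def fn_lemma_def z_def norm_mult)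
  have dpos: "K powr -real (Suc n) > 0" for n using K by simp
  have T0: "0 \<le> T n" for n by (simp add: T_def)
  have T1: "T n \<le> (K powr -real (Suc n)) powr \<nu> * (K powr -real (Suc n)) powr \<beta>" for n
    unfolding Teq by (intro mult_left_mono term_bound(1)[OF dpos b r]) auto
  have T2: "T n \<le> (K powr -real (Suc n)) powr \<nu> * s powr \<beta>" for n
    unfolding Teq s_def z_def by (intro mult_left_mono term_bound(2)[OF dpos b r]) auto
  have sb: "summable T \<and> suminf T \<le> B * s powr (\<nu>+\<beta>)"
    unfolding B_def by (rule series_bound[OF K nu nb spos T0 T1 T2])
  have "norm (F_lemma K \<nu> \<beta> z) = suminf T"
  proof -
    have e: "(\<lambda>n. cmod (fn_lemma K \<nu> \<beta> (Suc n) z)) = T" by (simp add: T_def fun_eq_iff)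
    have "0 \<le> suminf T" using sb T0 by (simp add: suminf_nonneg)
    then show ?thesis by (simp add: F_lemma_def e)
  qed
  also have "\<dots> \<le> B * s powr (\<nu>+\<beta>)" using sb by simp
  also have "\<dots> \<le> B * L powr (\<nu>+\<beta>)"
  proof (rule mult_left_mono)
    show "s powr (\<nu>+\<beta>) \<le> L powr (\<nu>+\<beta>)" using Lpos Ls nb by (intro powr_mono2') auto
    show "0 \<le> B" using K nu nb unfolding B_def
      by (intro add_nonneg_nonneg divide_nonneg_pos) (auto simp: powr_less_one less_imp_le
          intro!: divide_nonneg_nonneg)
  qed
  finally show ?thesis by (simp add: z_def L_def B_def)
qed

lemma Bnonneg: "(K::real) > 1 \<Longrightarrow> (\<nu>::real) > 0 \<Longrightarrow> \<nu> + (\<beta>::real) < 0 \<Longrightarrow>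
   0 \<le> K powr (-(\<nu>+\<beta>)) / (K powr (-(\<nu>+\<beta>)) - 1) + 1/(1 - K powr (-\<nu>))"
proof -
  assume K: "K > 1" and nu: "\<nu> > 0" and nb: "\<nu> + \<beta> < 0"
  have a: "K powr (-(\<nu>+\<beta>)) > 1" using K nb powr_less_mono[of 0 "-(\<nu>+\<beta>)" K] by simp
  have b: "K powr (-\<nu>) < 1" using K nu powr_less_mono[of "-\<nu>" 0 K] by simp
  show ?thesis using a b by (intro add_nonneg_nonneg divide_nonneg_nonneg) auto
qed

theorem lemma6p6:
  fixes p \<alpha> \<beta> :: real
  assumes "0 < p" and "0 < \<alpha>" and "\<beta> * p < -1" and "-(\<alpha> + \<beta> + 1/p) > 0"
  shows "\<exists>K0>1. \<forall>K\<ge>K0. \<exists>C. \<forall>r. 0 \<le> r \<and> r < 1 \<longrightarrow>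
           (1 - r) powr \<alpha> * Mp p r (F_lemma K (-(\<alpha> + \<beta> + 1/p)) \<beta>) \<le> C"
proof (rule exI[of _ 2], intro conjI allI impI)
  fix K :: real assume K2: "2 \<le> K"
  have K: "K > 1" using K2 by simp
  have p: "p > 0" using assms by simp
  define \<nu> where "\<nu> = -(\<alpha> + \<beta> + 1/p)"
  have nu: "\<nu> > 0" using assms by (simp add: \<nu>_def)
  define q where "q = \<alpha> * p + 1"
  have q: "q > 1" using assms by (simp add: q_def)
  have nbq: "(\<nu> + \<beta>) * p = -q" using p by (simp add: \<nu>_def q_def field_simps)
  have "(\<nu> + \<beta>) * p < 0" using nbq q by simp
  then have nb: "\<nu> + \<beta> < 0" using p by (simp add: mult_less_0_iff)
  have b: "\<beta> < 0" using nb nu by linarith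
  define B where "B = K powr (-(\<nu>+\<beta>)) / (K powr (-(\<nu>+\<beta>)) - 1) + 1/(1 - K powr (-\<nu>))"
  have B0: "0 \<le> B" unfolding B_def by (rule Bnonneg[OF K nu nb])
  define X where "X = B powr p * 3 powr q * (8/(q-1))"
  have X0: "0 \<le> X" using q by (simp add: X_def)
  show "\<exists>C. \<forall>r. 0 \<le> r \<and> r < 1 \<longrightarrow> (1 - r) powr \<alpha> * Mp p r (F_lemma K (-(\<alpha> + \<beta> + 1/p)) \<beta>) \<le> C"
  proof (intro exI[of _ "(X/(2*pi)) powr (1/p)"] allI impI)
    fix r :: real assume "0 \<le> r \<and> r < 1"
    then have r: "0 \<le> r" "r < 1" by auto
    define t where "t = 1 - r"
    have t: "t > 0" using r by (simp add: t_def)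
    define g where "g \<theta> = norm (F_lemma K \<nu> \<beta> (of_real r * cis \<theta>)) powr p" for \<theta>
    define h where "h \<theta> = (t + \<theta>/4) powr (-q) + (t + (2*pi-\<theta>)/4) powr (-q)" for \<theta>
    have gh: "g \<theta> \<le> B powr p * 3 powr q * h \<theta>" if th: "\<theta> \<in> {0..2*pi}" for \<theta>
    proof -
      define m where "m = min \<theta> (2*pi-\<theta>)"
      have th': "0 \<le> \<theta>" "\<theta> \<le> 2*pi" using th by auto
      have tm: "t + m/4 > 0" using t th' by (simp add: m_def add_pos_nonneg)
      have pw: "norm (F_lemma K \<nu> \<beta> (of_real r * cis \<theta>)) \<le> B * ((t + m/4)/3) powr (\<nu>+\<beta>)"
        using pointwise[OF K nu nb b r th'] by (simp add: B_def t_def m_def)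
      have "g \<theta> \<le> (B * ((t + m/4)/3) powr (\<nu>+\<beta>)) powr p"
        unfolding g_def using pw p by (intro powr_mono2) auto
      also have "\<dots> = B powr p * ((t + m/4)/3) powr (-q)"
        using B0 by (simp add: powr_mult powr_powr nbq)
      also have "((t + m/4)/3) powr (-q) = 3 powr q * (t + m/4) powr (-q)"
        using tm by (simp add: powr_divide powr_minus inverse_eq_divide)
      also have "(t + m/4) powr (-q) \<le> h \<theta>"
        by (cases "\<theta> \<le> 2*pi-\<theta>") (auto simp: h_def m_def min_def)
      then have "B powr p * (3 powr q * (t + m/4) powr (-q)) \<le> B powr p * 3 powr q * h \<theta>"
        by (simp add: mult.assoc mult_left_mono)
      finally show ?thesis .
    qed
    have hint: "((\<lambda>\<theta>. B powr p * 3 powr q * h \<theta>) has_integral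
        (B powr p * 3 powr q * (8/(q-1) * (t powr (1-q) - (t + pi/2) powr (1-q))))) {0..2*pi}"
      unfolding h_def by (intro has_integral_mult_right integral_h t q)
    have ival: "B powr p * 3 powr q * (8/(q-1) * (t powr (1-q) - (t + pi/2) powr (1-q))) \<le> X * t powr (1-q)"
    proof -
      have c: "0 \<le> B powr p * 3 powr q * (8/(q-1))" using q by simp
      have "B powr p * 3 powr q * (8/(q-1) * (t powr (1-q) - (t + pi/2) powr (1-q)))
          = (B powr p * 3 powr q * (8/(q-1))) * (t powr (1-q) - (t + pi/2) powr (1-q))" by (simp add: mult_ac)
      also have "\<dots> \<le> (B powr p * 3 powr q * (8/(q-1))) * (t powr (1-q))"
        by (rule mult_left_mono[OF _ c]) simp
      finally show ?thesis by (simp add: X_def)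
    qed
    have I: "0 \<le> integral {0..2*pi} g \<and> integral {0..2*pi} g \<le> X * t powr (1-q)"
    proof (cases "g integrable_on {0..2*pi}")
      case True
      have "integral {0..2*pi} g \<le> B powr p * 3 powr q * (8/(q-1) * (t powr (1-q) - (t + pi/2) powr (1-q)))"
        using has_integral_le[OF integrable_integral[OF True] hint gh] by simp
      moreover have "0 \<le> integral {0..2*pi} g" by (rule integral_nonneg[OF True]) (simp add: g_def)
      ultimately show ?thesis using ival by linarith
    next
      case False
      then show ?thesis using X0 by (simp add: not_integrable_integral)
    qed
    have "Mp p r (F_lemma K \<nu> \<beta>) = (integral {0..2*pi} g / (2*pi)) powr (1/p)"
      by (simp add: Mp_def g_def[abs_def])
    also have "\<dots> \<le> (X * t powr (1-q) / (2*pi)) powr (1/p)"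
      using I p by (intro powr_mono2 divide_right_mono) auto
    also have "\<dots> = (X/(2*pi)) powr (1/p) * t powr (-\<alpha>)"
    proof -
      have "(1-q) * (1/p) = -\<alpha>" using p by (simp add: q_def field_simps)
      have e: "X * t powr (1-q) / (2*pi) = (X/(2*pi)) * t powr (1-q)" by simp
      have "(X * t powr (1-q) / (2*pi)) powr (1/p) = (X/(2*pi)) powr (1/p) * (t powr (1-q)) powr (1/p)"
        unfolding e by (rule powr_mult)
      also have "(t powr (1-q)) powr (1/p) = t powr (-\<alpha>)" unfolding powr_powr \<open>(1-q) * (1/p) = -\<alpha>\<close> ..
      finally show ?thesis .
    qed
    finally have "t powr \<alpha> * Mp p r (F_lemma K \<nu> \<beta>) \<le> t powr \<alpha> * ((X/(2*pi)) powr (1/p) * t powr (-\<alpha>))"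
      by (intro mult_left_mono) auto
    also have "\<dots> = (X/(2*pi)) powr (1/p)" 
    proof -
      have "t powr \<alpha> > 0" using t by simp
      then show ?thesis by (simp add: powr_minus field_simps)
    qed
    finally show "(1 - r) powr \<alpha> * Mp p r (F_lemma K (-(\<alpha> + \<beta> + 1/p)) \<beta>) \<le> (X/(2*pi)) powr (1/p)"
      by (simp add: t_def \<nu>_def)
  qed
qed simp
end
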